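(* Assume $\sigma_1(x)=\tfrac12\sigma_1''(0)(x-a_1)(x-b_1)$ with $\sigma_1''(0)\ne0$ and real $a_1,b_1$, and $\tau'(0)=-\frac{\frac12\sigma_1''(0)}{1-q^{-1}}$, so that $\sigma_2$ has degree one, $\sigma_2(x)=\sigma_2'(0)(x-a_2)$ with $\sigma_2'(0)\ne0$. Let $\Lambda_q:=a_1+b_1-\frac{(1-q^{-1})\tau(0)}{\frac12\sigma_1''(0)}$ and assume $a_1<0<b_1<a_2$ and $\Lambda_q<0$. Put $a=a_1$, $b=b_1$ and $$\rho(x)=\frac{(qx/a,\,qx/b;q)_\infty}{(x/a_2;q)_\infty}.$$ Then there exist polynomials $P_n$, $n\in\mathbb{N}_0$, with $P_n$ of degree $n$ a solution of the q-EHT with $\lambda=\lambda_n$, and nonzero constants $d_n^2$, such that for all $m,n\in\mathbb{N}_0$ $$\int_a^bP_n(x)P_m(x)\rho(x)\,d_qx=d_n^2\delta_{mn},$$ i.e. orthogonality with respect to $\rho$ supported on $\{q^ka\}_{k\in\mathbb{N}_0}\cup\{q^kb\}_{k\in\mathbb{N}_0}$.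
   Context: Throughout $0<q<1$. For a function $y$ and $\zeta\in\{q,q^{-1}\}$, $D_\zeta y(x)=\frac{y(x)-y(\zeta x)}{(1-\zeta)x}$ for $x\ne0$ and $D_\zeta y(0)=y'(0)$; $[n]_q=\frac{1-q^n}{1-q}$. Let $\sigma_1$ be a real polynomial of degree at most two, $\tau(x)=\tau'(0)x+\tau(0)$ a real polynomial with $\tau'(0)\ne0$, and $\sigma_2(x):=q[\sigma_1(x)+(1-q^{-1})x\tau(x)]$. The q-EHT with parameter $n$ is $\sigma_1(x)D_{q^{-1}}D_qy(x)+\tau(x)D_qy(x)+\lambda_ny(x)=0$, $\lambda_n=-[n]_q\big(\tau'(0)+\tfrac12[n-1]_{q^{-1}}\sigma_1''(0)\big)$. $(\beta;q)_\infty=\prod_{k\ge0}(1-\beta q^k)$, $(\beta_1,\dots,\beta_r;q)_\infty=\prod_i(\beta_i;q)_\infty$. For $a<0<b$, $\int_a^b f(x)\,d_qx=(1-q)b\sum_{j\ge0}q^jf(q^jb)+(1-q)(-a)\sum_{j\ge0}q^jf(q^ja)$. *)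

theory Defs
  imports "HOL-Analysis.Analysis" "HOL-Computational_Algebra.Polynomial"
begin

definition qD :: "real \<Rightarrow> (real \<Rightarrow> real) \<Rightarrow> real \<Rightarrow> real" where
  "qD \<zeta> y x = (if x = 0 then deriv y 0 else (y x - y (\<zeta> * x)) / ((1 - \<zeta>) * x))"

definition qnum :: "real \<Rightarrow> int \<Rightarrow> real" where
  "qnum \<zeta> n = (1 - \<zeta> powi n) / (1 - \<zeta>)"

definition qpoch_inf :: "real \<Rightarrow> real \<Rightarrow> real" where
  "qpoch_inf \<beta> q = (\<Prod>k. 1 - \<beta> * q ^ k)"

text \<open>Jackson q-integral from a < 0 to b > 0.\<close>
definition qint :: "real \<Rightarrow> real \<Rightarrow> real \<Rightarrow> (real \<Rightarrow> real) \<Rightarrow> real" where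
  "qint q a b f = (1 - q) * b * (\<Sum>j. q ^ j * f (q ^ j * b))
                 + (1 - q) * (- a) * (\<Sum>j. q ^ j * f (q ^ j * a))"

end

theory Submission
  imports Defs
begin


definition qn :: "real \<Rightarrow> nat \<Rightarrow> real" where "qn z k = (1 - z^k) / (1 - z)"

definition Dp :: "real \<Rightarrow> real poly \<Rightarrow> real poly" where
  "Dp z p = (\<Sum>k\<le>degree p. monom (coeff p (Suc k) * qn z (Suc k)) k)"

lemma coeff_Dp: "coeff (Dp z p) j = coeff p (Suc j) * qn z (Suc j)"
proof (cases "j \<le> degree p")
  case True
  then show ?thesis by (simp add: Dp_def coeff_sum coeff_monom)
next
  case False
  then show ?thesis by (auto simp add: Dp_def coeff_sum coeff_monom coeff_eq_0)
qed

lemma poly_ext_Suc: "poly (p::real poly) y = coeff p 0 + (\<Sum>i\<le>degree p. coeff p (Suc i) * y ^ Suc i)"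
proof -
  have "poly p y = (\<Sum>i\<le>Suc (degree p). coeff p i * y ^ i)"
    using poly_altdef[of p y] by (simp add: sum.atMost_Suc coeff_eq_0)
  also have "\<dots> = coeff p 0 + (\<Sum>i\<le>degree p. coeff p (Suc i) * y ^ Suc i)"
    by (subst sum.atMost_Suc_shift) simp
  finally show ?thesis .
qed

lemma qD_poly:
  assumes "z \<noteq> 1"
  shows "qD z (poly p) = poly (Dp z p)"
proof
  fix x
  show "qD z (poly p) x = poly (Dp z p) x"
  proof (cases "x = 0")
    case True
    have "deriv (poly p) 0 = poly (pderiv p) 0"
      by (rule DERIV_imp_deriv) (rule poly_DERIV)
    also have "\<dots> = coeff p 1" by (simp add: poly_0_coeff_0 coeff_pderiv)
    finally show ?thesis using True
      by (simp add: qD_def poly_0_coeff_0 coeff_Dp qn_def assms)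
  next
    case False
    have "poly p x - poly p (z * x) = (\<Sum>i\<le>degree p. coeff p (Suc i) * (x ^ Suc i - (z*x) ^ Suc i))"
      by (simp add: poly_ext_Suc[of p] sum_subtractf algebra_simps)
    also have "\<dots> = (\<Sum>i\<le>degree p. ((1 - z) * x) * (coeff p (Suc i) * qn z (Suc i) * x ^ i))"
      using assms by (intro sum.cong) (auto simp: qn_def power_mult_distrib field_simps)
    finally have "poly p x - poly p (z * x) = ((1 - z) * x) * poly (Dp z p) x"
      by (simp add: Dp_def poly_sum poly_monom sum_distrib_left)
    then show ?thesis using False assms by (simp add: qD_def)
  qed
qed

lemma Dp_add: "Dp z (p + r) = Dp z p + Dp z r"
  by (rule poly_eqI) (simp add: coeff_Dp algebra_simps)
lemma Dp_smult: "Dp z (smult c p) = smult c (Dp z p)"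
  by (rule poly_eqI) (simp add: coeff_Dp algebra_simps)
lemma Dp_monom0: "Dp z (monom c 0) = 0"
  by (rule poly_eqI) (simp add: coeff_Dp coeff_monom)
lemma Dp_zero: "Dp z 0 = 0"
  by (rule poly_eqI) (simp add: coeff_Dp)
lemma Dp_one: "Dp z 1 = 0"
  by (rule poly_eqI) (simp add: coeff_Dp)
lemma Dp_monomS: "Dp z (monom c (Suc m)) = monom (c * qn z (Suc m)) m"
  by (rule poly_eqI) (auto simp add: coeff_Dp coeff_monom)

definition Lp :: "real \<Rightarrow> real \<Rightarrow> real \<Rightarrow> real \<Rightarrow> real \<Rightarrow> real \<Rightarrow> real poly \<Rightarrow> real poly" where
  "Lp q s a b t0 t1 p = smult (s/2) [:a*b, -(a+b), 1:] * Dp (1/q) (Dp q p) + [:t0, t1:] * Dp q p"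

lemma Lp_add: "Lp q s a b t0 t1 (p + r) = Lp q s a b t0 t1 p + Lp q s a b t0 t1 r"
  unfolding Lp_def Dp_add by (simp only: distrib_left add_ac)
lemma Lp_smult: "Lp q s a b t0 t1 (smult c p) = smult c (Lp q s a b t0 t1 p)"
  unfolding Lp_def Dp_smult by (simp only: mult_smult_right smult_add_right)

lemma Lp_monom:
  "degree (Lp q s a b t0 t1 (monom 1 i)) \<le> i \<and>
   coeff (Lp q s a b t0 t1 (monom 1 i)) i =
     (if i = 0 then 0 else qn q i * (t1 + s/2 * qn (1/q) (i - 1)))"
proof (cases i)
  case 0
  then show ?thesis by (simp add: Lp_def Dp_one Dp_zero)
next
  case (Suc m)
  show ?thesis
  proof (cases m)
    case 0
    then show ?thesis using Suc by (simp add: Lp_def Dp_monom0 Dp_monomS qn_def)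
  next
    case (Suc k)
    have e: "Lp q s a b t0 t1 (monom 1 i) =
       monom (qn q i * qn (1/q) (Suc k)) k * smult (s/2) [:a*b, -(a+b), 1:]
       + monom (qn q i) (Suc k) * [:t0, t1:]"
      using \<open>i = Suc m\<close> Suc by (simp add: Lp_def Dp_monomS mult.commute)
    have dS: "degree (smult (s/2) [:a*b, -(a+b), 1:]) \<le> 2"
      by (rule order.trans[OF degree_smult_le]) simp
    have d1: "degree (monom (qn q i * qn (1/q) (Suc k)) k * smult (s/2) [:a*b, -(a+b), 1:]) \<le> i"
      using degree_mult_le[of "monom (qn q i * qn (1/q) (Suc k)) k" "smult (s/2) [:a*b, -(a+b), 1:]"]
        degree_monom_le[of "qn q i * qn (1/q) (Suc k)" k] dS \<open>i = Suc m\<close> Suc by linarith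
    have dT: "degree [:t0, t1:] \<le> 1" by simp
    have d2: "degree (monom (qn q i) (Suc k) * [:t0, t1:]) \<le> i"
      using degree_mult_le[of "monom (qn q i) (Suc k)" "[:t0, t1:]"]
        degree_monom_le[of "qn q i" "Suc k"] dT \<open>i = Suc m\<close> Suc by linarith
    have c: "coeff (Lp q s a b t0 t1 (monom 1 i)) i = qn q i * (t1 + s/2 * qn (1/q) (i - 1))"
      unfolding e coeff_add coeff_monom_mult using \<open>i = Suc m\<close> Suc
      by (simp add: algebra_simps numeral_2_eq_2)
    show ?thesis
      unfolding c using \<open>i = Suc m\<close> degree_add_le[OF d1 d2] e by simp
  qed
qed




lemma deg_dec: "degree (r::real poly) \<le> Suc k \<Longrightarrow> coeff r (Suc k) = 0 \<Longrightarrow> degree r \<le> k"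
proof (rule ccontr)
  assume a: "degree r \<le> Suc k" "coeff r (Suc k) = 0" "\<not> degree r \<le> k"
  then have d: "degree r = Suc k" by simp
  then have "r \<noteq> 0" by auto
  then have "coeff r (degree r) \<noteq> 0" by simp
  then show False using a d by simp
qed

lemma deg_zero: "degree (r::real poly) \<le> 0 \<Longrightarrow> coeff r 0 = 0 \<Longrightarrow> r = 0"
proof (rule poly_eqI)
  fix n assume a: "degree r \<le> 0" "coeff r 0 = 0"
  show "coeff r n = coeff 0 n"
    using a coeff_eq_0[of r n] by (cases n) auto
qed

lemma exists_eig:
  fixes M :: "real poly \<Rightarrow> real poly" and \<mu> :: "nat \<Rightarrow> real"
  assumes add: "\<And>p r. M (p + r) = M p + M r"
    and sm: "\<And>c p. M (smult c p) = smult c (M p)"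
    and mon: "\<And>i. degree (M (monom 1 i)) \<le> i \<and> coeff (M (monom 1 i)) i = \<mu> i"
    and nz: "\<And>i. i < n \<Longrightarrow> \<mu> i \<noteq> 0" and z: "\<mu> n = 0"
  shows "\<exists>P. degree P = n \<and> P \<noteq> 0 \<and> M P = 0"
proof -
  have step: "degree (g - M (monom (coeff g k / \<mu> k) k)) \<le> k \<and>
              coeff (g - M (monom (coeff g k / \<mu> k) k)) k = 0"
    if "k < n" "degree g \<le> k" for g k
  proof -
    have e: "M (monom (coeff g k / \<mu> k) k) = smult (coeff g k / \<mu> k) (M (monom 1 k))"
      using sm[of "coeff g k / \<mu> k" "monom 1 k"] by (simp add: smult_monom)
    have "degree (M (monom (coeff g k / \<mu> k) k)) \<le> k"
      unfolding e by (rule order.trans[OF degree_smult_le]) (use mon[of k] in auto)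
    then have "degree (g - M (monom (coeff g k / \<mu> k) k)) \<le> k"
      using that(2) degree_diff_le by blast
    moreover have "coeff (g - M (monom (coeff g k / \<mu> k) k)) k = 0"
      unfolding e using mon[of k] nz[OF that(1)] by simp
    ultimately show ?thesis by blast
  qed
  have claim: "\<forall>g. degree g \<le> k \<longrightarrow> (\<exists>h. degree h \<le> k \<and> M h = g)" if "k < n" for k
    using that
  proof (induction k)
    case 0
    show ?case
    proof (intro allI impI)
      fix g :: "real poly" assume g: "degree g \<le> 0"
      from step[OF 0 g] have "g - M (monom (coeff g 0 / \<mu> 0) 0) = 0"
        using deg_zero by blast
      then show "\<exists>h. degree h \<le> 0 \<and> M h = g"
        using degree_monom_le[of "coeff g 0 / \<mu> 0" 0]
        by (intro exI[of _ "monom (coeff g 0 / \<mu> 0) 0"]) simp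
    qed
  next
    case (Suc k)
    show ?case
    proof (intro allI impI)
      fix g :: "real poly" assume g: "degree g \<le> Suc k"
      define h0 where "h0 = monom (coeff g (Suc k) / \<mu> (Suc k)) (Suc k)"
      from step[OF Suc.prems g] have "degree (g - M h0) \<le> k"
        unfolding h0_def using deg_dec by blast
      then obtain h1 where h1: "degree h1 \<le> k" "M h1 = g - M h0"
        using Suc.IH[OF Suc_lessD[OF Suc.prems]] by blast
      have "degree (h0 + h1) \<le> Suc k"
        using h1(1) degree_monom_le[of _ "Suc k"] unfolding h0_def
        by (intro degree_add_le) auto
      moreover have "M (h0 + h1) = g" by (simp add: add h1)
      ultimately show "\<exists>h. degree h \<le> Suc k \<and> M h = g" by blast
    qed
  qed
  show ?thesis
  proof (cases n)
    case 0
    have "M (monom 1 0) = 0" by (rule deg_zero) (use mon[of 0] z 0 in auto)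
    then show ?thesis using 0 by (intro exI[of _ "monom 1 0"]) (simp add: monom_eq_0_iff)
  next
    case (Suc k)
    have "degree (M (monom 1 n)) \<le> k" by (rule deg_dec) (use mon[of n] z Suc in auto)
    moreover have "k < n" using Suc by simp
    ultimately obtain h where h: "degree h \<le> k" "M h = M (monom 1 n)"
      using claim[of k] by blast
    define P where "P = monom 1 n + smult (-1) h"
    have "degree P = n" unfolding P_def
      using h(1) Suc by (subst degree_add_eq_left) (auto simp: degree_monom_eq)
    moreover have "M P = 0" unfolding P_def add sm h(2) by simp
    moreover have "P \<noteq> 0" using \<open>degree P = n\<close> Suc by auto
    ultimately show ?thesis by blast
  qed
qed




definition qp :: "real \<Rightarrow> real \<Rightarrow> nat \<Rightarrow> real" where "qp \<beta> q k = 1 - \<beta> * q ^ k"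

lemma qp_conv:
  assumes "0 < q" "q < 1"
  shows "convergent_prod (\<lambda>k. 1 - \<beta> * q ^ k :: real)"
proof -
  have "summable (\<lambda>k. norm ((1 - \<beta> * q ^ k) - 1))"
    using assms by (simp add: abs_mult power_abs summable_geometric)
  then show ?thesis
    by (intro abs_convergent_prod_imp_convergent_prod summable_imp_abs_convergent_prod)
qed

lemma qp_fac_pos:
  fixes q \<beta> :: real
  assumes "0 < q" "q < 1" "\<beta> < 1"
  shows "0 < 1 - \<beta> * q ^ k"
proof (cases "\<beta> \<le> 0")
  case True
  have "\<beta> * q ^ k \<le> 0" using True assms by (simp add: mult_le_0_iff)
  then show ?thesis by linarith
next
  case False
  have "\<beta> * q ^ k \<le> \<beta>" using False assms by (simp add: mult_left_le power_le_one)
  then show ?thesis using assms by linarith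
qed

lemma qpoch_pos:
  assumes "0 < q" "q < 1" "\<beta> < 1"
  shows "0 < qpoch_inf \<beta> q"
  unfolding qpoch_inf_def using qp_conv[OF assms(1,2)] qp_fac_pos[OF assms]
  by (intro less_0_prodinf) auto

lemma qpoch_shift:
  assumes "0 < q" "q < 1" "\<beta> < 1"
  shows "qpoch_inf \<beta> q = (1 - \<beta>) * qpoch_inf (\<beta> * q) q"
proof -
  have "(\<Prod>n. 1 - \<beta> * q ^ Suc n) = qpoch_inf \<beta> q / (1 - \<beta> * q ^ 0)"
    unfolding qpoch_inf_def
    using prodinf_split_head[OF qp_conv[OF assms(1,2)]] qp_fac_pos[OF assms, of 0] by simp
  moreover have "(\<lambda>n. 1 - \<beta> * q ^ Suc n) = (\<lambda>n. 1 - \<beta> * q * q ^ n)" by (simp add: mult.assoc)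
  ultimately show ?thesis using qp_fac_pos[OF assms, of 0] unfolding qpoch_inf_def by simp
qed

lemma qpoch_tail:
  assumes "0 < q" "q < 1" "\<beta> < 1"
  shows "(\<lambda>N. qpoch_inf (\<beta> * q ^ N) q) \<longlonglongrightarrow> 1"
proof -
  let ?f = "\<lambda>k. 1 - \<beta> * q ^ k"
  have nz: "?f k \<noteq> 0" for k using qp_fac_pos[OF assms, of k] by simp
  have P: "prodinf ?f \<noteq> 0" using prodinf_nonzero[OF qp_conv[OF assms(1,2)]] nz by blast
  have eq: "qpoch_inf (\<beta> * q ^ N) q = prodinf ?f / (\<Prod>i<N. ?f i)" for N
  proof -
    have "prodinf ?f = (\<Prod>i. ?f (i + N)) * (\<Prod>i<N. ?f i)"
      using prodinf_split_initial_segment[OF qp_conv[OF assms(1,2)]] nz by blast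
    moreover have "(\<lambda>i. ?f (i + N)) = (\<lambda>i. 1 - \<beta> * q ^ N * q ^ i)"
      by (simp add: power_add mult_ac)
    moreover have "(\<Prod>i<N. ?f i) \<noteq> 0" using nz by (simp add: prod_zero_iff)
    ultimately show ?thesis unfolding qpoch_inf_def by simp
  qed
  have "(\<lambda>N. \<Prod>i<N. ?f i) \<longlonglongrightarrow> prodinf ?f"
    using convergent_prod_LIMSEQ[OF qp_conv[OF assms(1,2)]] LIMSEQ_lessThan_iff_atMost by blast
  then have "(\<lambda>N. prodinf ?f / (\<Prod>i<N. ?f i)) \<longlonglongrightarrow> prodinf ?f / prodinf ?f"
    using P by (intro tendsto_intros) auto
  then show ?thesis using P unfolding eq by simp
qed




lemma hD_gen:
  fixes a b c e q :: real
  assumes "e \<noteq> 0" "q \<noteq> 0"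
  shows "((a-b)/e - (c-a)/(e/q))/(-e/q) = -q*((a-b)-q*(c-a))/e^2"
  using assms by (simp add: field_simps power2_eq_square)

lemma step_e:
  fixes q e R S T fa fb fc ga gb gc :: real
  assumes "e \<noteq> 0"
  shows "e*(R*(ga*(S*(-q*((fa-fb)-q*(fc-fa))/e^2) + T*((fa - fb)/e))
        - fa*(S*(-q*((ga-gb)-q*(gc-ga))/e^2) + T*((ga - gb)/e))))
   = R*q*S*(ga*fb - fa*gb)/e - R*T*(ga*fb - fa*gb) + q^2*R*S*(ga*fc - fa*gc)/e"
  using assms by (simp add: field_simps power2_eq_square)

lemma step_id:
  fixes f g :: "real \<Rightarrow> real" and q x R S T :: real
  assumes "0<q" "q<1" "x\<noteq>0"
  shows "(1-q)*x*(R*(g x*(S*qD (1/q) (qD q f) x + T*qD q f x) - f x*(S*qD (1/q) (qD q g) x + T*qD q g x)))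
   = R*(q*(S + (1-1/q)*x*T))*(g x*f(q*x) - f x*g(q*x))/((1-q)*x)
     + q^2*R*S*(g x*f(1/q*x) - f x*g(1/q*x))/((1-q)*x)"
proof -
  have nz: "1/q*x \<noteq> 0" "q*(1/q*x) = x" using assms by auto
  have e: "(1-q)*x \<noteq> 0" "q \<noteq> 0" using assms by auto
  have r: "(1-q)*(1/q*x) = ((1-q)*x)/q" "(1-1/q)*x = -((1-q)*x)/q" using e by (auto simp: field_simps)
  have r1: "R*(q*(S + (1-1/q)*x*T))*(g x*f(q*x) - f x*g(q*x))/((1-q)*x) = R*q*S*(g x*f(q*x) - f x*g(q*x))/((1-q)*x) - R*T*(g x*f(q*x) - f x*g(q*x))"
    using e by (simp add: field_simps)
  show ?thesis
    unfolding qD_def r1 using assms nz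
    apply (simp only: if_False nz r hD_gen[OF e])
    apply (rule step_e[OF e(1)])
    done
qed




lemma poly_Lp:
  assumes "0<q" "q<1"
  shows "poly (Lp q s a b t0 t1 p) x = s/2*(x-a)*(x-b) * qD (1/q) (qD q (poly p)) x + (t1*x+t0) * qD q (poly p) x"
proof -
  have "q \<noteq> 1" "1/q \<noteq> 1" using assms by auto
  then show ?thesis by (simp add: Lp_def qD_poly field_simps)
qed

lemma lat_facts:
  fixes q a1 b1 a2 c :: real
  assumes "0<q" "q<1" "a1<0" "0<b1" "b1<a2" "c = a1 \<or> c = b1"
  shows "q^j*c \<noteq> 0 \<and> q*(q^j*c)/a1 < 1 \<and> q*(q^j*c)/b1 < 1 \<and> (q^j*c)/a2 < 1"
proof -
  have p1: "0 < q^j" "q^j \<le> 1" using assms by (auto simp: power_le_one)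
  have "q*q^j \<le> q*1" using p1 assms by (intro mult_left_mono) auto
  then have "q*q^j < 1" using assms by linarith
  then have p: "0 < q^j" "q^j \<le> 1" "q*q^j < 1" using p1 by auto
  show ?thesis using assms(6)
  proof
    assume c: "c = a1"
    have "q*(q^j*c)/a1 = q*q^j" using c assms by simp
    moreover have "q*(q^j*c)/b1 < 0" using c assms p by (simp add: divide_neg_pos mult_pos_neg)
    moreover have "(q^j*c)/a2 < 0" using c assms p by (simp add: divide_neg_pos mult_pos_neg)
    moreover have nz: "q^j*c \<noteq> 0" using c assms p by simp
    ultimately show ?thesis using p by (intro conjI nz; linarith)
  next
    assume c: "c = b1"
    have h1: "q*(q^j*c)/b1 = q*q^j" using c assms by simp
    have h2: "q*(q^j*c)/a1 < 0" using c assms p by (simp add: divide_pos_neg)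
    have "q^j*c \<le> c" using c assms p by (simp add: mult_left_le_one_le)
    then have "q^j*c < a2" using c assms by linarith
    moreover have "0 < a2" using assms by linarith
    ultimately have h3: "(q^j*c)/a2 < 1" by simp
    have nz: "q^j*c \<noteq> 0" using c assms p by simp
    show ?thesis using p h1 h2 h3 by (intro conjI nz; linarith)
  qed
qed

lemma mulq_lt1:
  fixes q \<beta> :: real
  assumes "0 < q" "q < 1" "\<beta> < 1"
  shows "\<beta> * q < 1"
proof (cases "\<beta> \<le> 0")
  case True
  then have "\<beta> * q \<le> 0" using assms by (simp add: mult_le_0_iff)
  then show ?thesis by linarith
next
  case False
  then have "\<beta> * q \<le> \<beta> * 1" using assms by (intro mult_left_mono) auto
  then show ?thesis using assms by linarith
qed




lemma pearson:
  fixes q s a1 b1 a2 k y t0 t1 :: real and \<rho> :: "real \<Rightarrow> real"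
  assumes q: "0<q" "q<1" and ne: "a1 \<noteq> 0" "b1 \<noteq> 0" "a2 \<noteq> 0"
    and \<sigma>2k: "\<And>x. q*(s/2*(x-a1)*(x-b1) + (1-1/q)*x*(t1*x+t0)) = k*(x-a2)"
    and \<rho>_def: "\<rho> = (\<lambda>x. qpoch_inf (q*x/a1) q * qpoch_inf (q*x/b1) q / qpoch_inf (x/a2) q)"
    and y: "q*y/a1 < 1" "q*y/b1 < 1" "y/a2 < 1"
  shows "\<rho> y * (k*(y-a2)) = q * \<rho> (q*y) * (s/2*(q*y-a1)*(q*y-b1))"
proof -
  have "q*(s/2*(0-a1)*(0-b1) + (1-1/q)*0*(t1*0+t0)) = k*(0-a2)" by (rule \<sigma>2k)
  then have k0: "-k*a2 = q*(s/2*a1*b1)" by simp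
  define A where "A = qpoch_inf (q*y/a1*q) q"
  define B where "B = qpoch_inf (q*y/b1*q) q"
  define C where "C = qpoch_inf (y/a2*q) q"
  have s1: "qpoch_inf (q*y/a1) q = (1 - q*y/a1)*A" unfolding A_def by (rule qpoch_shift[OF q y(1)])
  have s2: "qpoch_inf (q*y/b1) q = (1 - q*y/b1)*B" unfolding B_def by (rule qpoch_shift[OF q y(2)])
  have s3: "qpoch_inf (y/a2) q = (1 - y/a2)*C" unfolding C_def by (rule qpoch_shift[OF q y(3)])
  have Cpos: "C > 0" unfolding C_def by (rule qpoch_pos[OF q mulq_lt1[OF q y(3)]])
  have ya2: "a2 - y \<noteq> 0" using y(3) ne(3)
    by (metis diff_self divide_self_if eq_iff_diff_eq_0 less_irrefl)
  have \<rho>q: "\<rho> (q*y) = A*B/C" unfolding \<rho>_def A_def B_def C_def by (simp add: mult_ac)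
  have \<rho>y: "\<rho> y = (1 - q*y/a1)*A*((1 - q*y/b1)*B)/((1 - y/a2)*C)" unfolding \<rho>_def s1 s2 s3 by simp
  have e1: "k*(y-a2)/(1-y/a2) = -k*a2" using ya2 ne by (simp add: field_simps)
  have "\<rho> y * (k*(y-a2)) = ((1-q*y/a1)*(1-q*y/b1)*(A*B/C)) * (k*(y-a2)/(1-y/a2))"
    unfolding \<rho>y using Cpos ya2 ne by (simp add: field_simps)
  also have "\<dots> = ((1-q*y/a1)*(1-q*y/b1)*(A*B/C)) * (q*(s/2*a1*b1))" unfolding e1 k0 ..
  also have "\<dots> = q * \<rho> (q*y) * (s/2*(q*y-a1)*(q*y-b1))"
    unfolding \<rho>q using ne Cpos by (simp add: field_simps)
  finally show ?thesis .
qed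

lemma summable_lat:
  fixes X :: "nat \<Rightarrow> real"
  assumes "0<q" "q<1" "X \<longlonglongrightarrow> L"
  shows "summable (\<lambda>j. q^j * X j)"
proof -
  have "Bseq X" using assms(3) by (rule convergent_imp_Bseq[OF convergentI])
  then obtain K where K: "K > 0" "\<And>j. norm (X j) \<le> K" by (auto simp: Bseq_def)
  show ?thesis
  proof (rule summable_comparison_test)
    show "\<exists>N. \<forall>n\<ge>N. norm (q^n * X n) \<le> K * q^n"
      using K assms by (auto simp: abs_mult mult.commute intro!: mult_right_mono)
    show "summable (\<lambda>n. K * q^n)" using assms by (intro summable_mult summable_geometric) auto
  qed
qed

lemma poly_lat_lim:
  assumes "0<q" "q<1"
  shows "(\<lambda>N. poly P (q^N*c)) \<longlonglongrightarrow> poly P (0::real)"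
proof -
  have "(\<lambda>N. q^N*c) \<longlonglongrightarrow> 0*c" using assms by (intro tendsto_intros LIMSEQ_power_zero) auto
  then show ?thesis by (intro isCont_tendsto_compose[OF poly_isCont]) simp
qed

lemma rho_lat_lim:
  fixes q a1 b1 a2 c :: real and \<rho> :: "real \<Rightarrow> real"
  assumes "0<q" "q<1" "a1<0" "0<b1" "b1<a2" "c = a1 \<or> c = b1"
    and \<rho>_def: "\<rho> = (\<lambda>x. qpoch_inf (q*x/a1) q * qpoch_inf (q*x/b1) q / qpoch_inf (x/a2) q)"
  shows "(\<lambda>N. \<rho> (q^N*c)) \<longlonglongrightarrow> 1"
proof -
  have l: "q*(q^0*c)/a1 < 1 \<and> q*(q^0*c)/b1 < 1 \<and> (q^0*c)/a2 < 1"
    using lat_facts[OF assms(1-6), of 0] by blast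
  have e: "\<rho> (q^N*c) = qpoch_inf (q*c/a1*q^N) q * qpoch_inf (q*c/b1*q^N) q / qpoch_inf (c/a2*q^N) q" for N
    unfolding \<rho>_def by (simp add: mult_ac)
  have "(\<lambda>N. qpoch_inf (q*c/a1*q^N) q * qpoch_inf (q*c/b1*q^N) q / qpoch_inf (c/a2*q^N) q) \<longlonglongrightarrow> 1*1/1"
    using l assms(1,2) by (intro tendsto_intros qpoch_tail) auto
  then show ?thesis unfolding e by simp
qed




lemma E_alg:
  fixes e R S ga gb fa fb :: real
  assumes "e \<noteq> 0"
  shows "R*S*(ga*fb - fa*gb)/e = R*S*(fa*((ga-gb)/e) - ga*((fa-fb)/e))"
  using assms by (simp add: field_simps)

lemma fin_alg:
  fixes q c1 c2 A1 A2 B1 B2 L :: real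
  assumes "(1-q)*c1*(A1 - A2) = L" "(1-q)*c2*(B1 - B2) = L"
  shows "(1-q)*c2*B1 + (1-q)*(-c1)*A1 = (1-q)*c2*B2 + (1-q)*(-c1)*A2"
proof -
  have "(1-q)*c2*B1 - (1-q)*c2*B2 = (1-q)*c1*A1 - (1-q)*c1*A2"
    using assms by (simp add: right_diff_distrib)
  then show ?thesis by simp
qed

lemma symmetric:
  fixes q s a1 b1 a2 t0 t1 k :: real and \<rho> :: "real \<Rightarrow> real" and p r :: "real poly"
  assumes q: "0<q" "q<1" and ord: "a1<0" "0<b1" "b1<a2"
    and \<sigma>2k: "\<And>x. q*(s/2*(x-a1)*(x-b1) + (1-1/q)*x*(t1*x+t0)) = k*(x-a2)"
    and \<rho>_def: "\<rho> = (\<lambda>x. qpoch_inf (q*x/a1) q * qpoch_inf (q*x/b1) q / qpoch_inf (x/a2) q)"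
  shows "qint q a1 b1 (\<lambda>x. poly (Lp q s a1 b1 t0 t1 p) x * poly r x * \<rho> x)
       = qint q a1 b1 (\<lambda>x. poly p x * poly (Lp q s a1 b1 t0 t1 r) x * \<rho> x)"
proof -
  define f where "f = poly p"
  define g where "g = poly r"
  define LP where "LP = poly (Lp q s a1 b1 t0 t1 p)"
  define LR where "LR = poly (Lp q s a1 b1 t0 t1 r)"
  define \<sigma>1 where "\<sigma>1 = (\<lambda>x::real. s/2*(x-a1)*(x-b1))"
  define \<sigma>2 where "\<sigma>2 = (\<lambda>x::real. k*(x-a2))"
  define E where "E = (\<lambda>x. \<rho> x * \<sigma>2 x * (g x * f (q*x) - f x * g (q*x)) / ((1-q)*x))"
  define Fx where "Fx = (\<lambda>x. q^2 * \<rho> x * \<sigma>1 x * (g x * f (1/q*x) - f x * g (1/q*x)) / ((1-q)*x))"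
  define Tm where "Tm = (\<lambda>c j. (1-q)*(q^j*c)*(\<rho> (q^j*c)*(g (q^j*c)*LP (q^j*c) - f (q^j*c)*LR (q^j*c))))"
  define W0 where "W0 = f 0 * poly (Dp q r) 0 - g 0 * poly (Dp q p) 0"
  have ne: "a1 \<noteq> 0" "b1 \<noteq> 0" "a2 \<noteq> 0" using ord by auto
  have q1: "q \<noteq> 1" using q by simp
  have stepc: "(1-q)*x*(\<rho> x*(g x*LP x - f x*LR x)) = E x + Fx x" if "x \<noteq> 0" for x
  proof -
    have "\<sigma>2 x = q*(\<sigma>1 x + (1-1/q)*x*(t1*x+t0))" unfolding \<sigma>1_def \<sigma>2_def using \<sigma>2k[of x] by simp
    then show ?thesis
      unfolding LP_def LR_def poly_Lp[OF q] E_def Fx_def f_def g_def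
      using step_id[OF q that, where f="poly p" and g="poly r" and R="\<rho> x" and S="\<sigma>1 x" and T="t1*x+t0"] unfolding \<sigma>1_def by simp
  qed
  have tele: "(\<Sum>j<Suc N. Tm c j) = E (q^N*c)" if c: "c = a1 \<or> c = b1" for c N
  proof (induction N)
    case 0
    have "c \<noteq> 0" using c ne by auto
    moreover have "\<sigma>1 c = 0" using c unfolding \<sigma>1_def by auto
    ultimately show ?case using stepc[of c] unfolding Tm_def Fx_def by simp
  next
    case (Suc N)
    define y where "y = q^N*c"
    have L: "q^N*c \<noteq> 0 \<and> q*(q^N*c)/a1 < 1 \<and> q*(q^N*c)/b1 < 1 \<and> (q^N*c)/a2 < 1"
      by (rule lat_facts[OF q ord c])
    have yn: "y \<noteq> 0" using L y_def by simp
    have P: "\<rho> y * (k*(y-a2)) = q * \<rho> (q*y) * (s/2*(q*y-a1)*(q*y-b1))"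
      by (rule pearson[OF q ne \<sigma>2k \<rho>_def]) (use L y_def in auto)
    have qy: "q^(Suc N)*c = q*y" "1/q*(q*y) = y" using q by (auto simp: y_def)
    have "Fx (q*y) = (q*\<rho> (q*y)*\<sigma>1 (q*y)) * (g (q*y)*f y - f (q*y)*g y)/((1-q)*y)"
      unfolding Fx_def qy using yn q by (simp add: field_simps power2_eq_square)
    also have "\<dots> = (\<rho> y * \<sigma>2 y) * (g (q*y)*f y - f (q*y)*g y)/((1-q)*y)"
      by (simp only: \<sigma>1_def \<sigma>2_def P[symmetric])
    also have "\<dots> = - E y"
      unfolding E_def using yn q by (simp add: field_simps)
    finally have "Fx (q*y) = - E y" .
    moreover have "Tm c (Suc N) = E (q*y) + Fx (q*y)"
      using stepc[of "q*y"] yn q unfolding Tm_def qy by simp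
    ultimately show ?case using Suc.IH qy(1) unfolding y_def by (simp add: mult.assoc)
  qed
  have Elim: "(\<lambda>N. E (q^N*c)) \<longlonglongrightarrow> 1 * \<sigma>2 0 * W0" if c: "c = a1 \<or> c = b1" for c
  proof -
    have eq: "E (q^N*c) = \<rho> (q^N*c) * \<sigma>2 (q^N*c) *
        (f (q^N*c) * poly (Dp q r) (q^N*c) - g (q^N*c) * poly (Dp q p) (q^N*c))" for N
    proof -
      have yn: "q^N*c \<noteq> 0" using lat_facts[OF q ord c, of N] by blast
      have d1: "poly (Dp q r) (q^N*c) = (g (q^N*c) - g (q*(q^N*c)))/((1-q)*(q^N*c))"
        unfolding g_def qD_poly[OF q1, symmetric] qD_def using yn q by simp
      have d2: "poly (Dp q p) (q^N*c) = (f (q^N*c) - f (q*(q^N*c)))/((1-q)*(q^N*c))"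
        unfolding f_def qD_poly[OF q1, symmetric] qD_def using yn q by simp
      have e: "(1-q)*(q^N*c) \<noteq> 0" using yn q by simp
      show ?thesis unfolding E_def d1 d2 by (rule E_alg[OF e])
    qed
    have "(\<lambda>N. \<rho> (q^N*c) * \<sigma>2 (q^N*c) *
        (f (q^N*c) * poly (Dp q r) (q^N*c) - g (q^N*c) * poly (Dp q p) (q^N*c))) \<longlonglongrightarrow> 1 * \<sigma>2 0 * W0"
      unfolding W0_def f_def g_def \<sigma>2_def
      by (intro tendsto_intros rho_lat_lim[OF q ord c \<rho>_def] poly_lat_lim[OF q]
            tendsto_mult_left_zero LIMSEQ_power_zero) (use q in auto)
    then show ?thesis unfolding eq .
  qed
  have sumsT: "Tm c sums (\<sigma>2 0 * W0)" if c: "c = a1 \<or> c = b1" for c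
  proof -
    have "(\<lambda>N. E (q^N*c)) \<longlonglongrightarrow> \<sigma>2 0 * W0" using Elim[OF c] by simp
    then have "(\<lambda>N. \<Sum>j<Suc N. Tm c j) \<longlonglongrightarrow> \<sigma>2 0 * W0"
      unfolding tele[OF c] .
    then show ?thesis unfolding sums_def by (rule LIMSEQ_imp_Suc)
  qed
  have pl: "(\<lambda>j. poly P (q^j*c)) \<longlonglongrightarrow> poly P 0" for P c by (rule poly_lat_lim[OF q])
  have conv1: "(\<lambda>j. LP (q^j*c) * g (q^j*c) * \<rho> (q^j*c)) \<longlonglongrightarrow> LP 0 * g 0 * 1" if c: "c = a1 \<or> c = b1" for c
    unfolding LP_def g_def by (rule tendsto_mult[OF tendsto_mult[OF pl pl] rho_lat_lim[OF q ord c \<rho>_def]])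
  have conv2: "(\<lambda>j. f (q^j*c) * LR (q^j*c) * \<rho> (q^j*c)) \<longlonglongrightarrow> f 0 * LR 0 * 1" if c: "c = a1 \<or> c = b1" for c
    unfolding LR_def f_def by (rule tendsto_mult[OF tendsto_mult[OF pl pl] rho_lat_lim[OF q ord c \<rho>_def]])
  have key: "(1-q)*c*((\<Sum>j. q^j * (LP (q^j*c) * g (q^j*c) * \<rho> (q^j*c))) - (\<Sum>j. q^j * (f (q^j*c) * LR (q^j*c) * \<rho> (q^j*c))))
      = \<sigma>2 0 * W0" if c: "c = a1 \<or> c = b1" for c
  proof -
    have s1: "summable (\<lambda>j. q^j * (LP (q^j*c) * g (q^j*c) * \<rho> (q^j*c)))"
      by (rule summable_lat[OF q conv1[OF c]])
    have s2: "summable (\<lambda>j. q^j * (f (q^j*c) * LR (q^j*c) * \<rho> (q^j*c)))"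
      by (rule summable_lat[OF q conv2[OF c]])
    have "(\<lambda>j. (1-q)*c*(q^j * (LP (q^j*c) * g (q^j*c) * \<rho> (q^j*c)) - q^j * (f (q^j*c) * LR (q^j*c) * \<rho> (q^j*c))))
       sums ((1-q)*c*((\<Sum>j. q^j * (LP (q^j*c) * g (q^j*c) * \<rho> (q^j*c))) - (\<Sum>j. q^j * (f (q^j*c) * LR (q^j*c) * \<rho> (q^j*c)))))"
      by (intro sums_mult sums_diff summable_sums s1 s2)
    moreover have "(\<lambda>j. (1-q)*c*(q^j * (LP (q^j*c) * g (q^j*c) * \<rho> (q^j*c)) - q^j * (f (q^j*c) * LR (q^j*c) * \<rho> (q^j*c)))) = Tm c"
      unfolding Tm_def by (auto simp: algebra_simps)
    ultimately have "Tm c sums ((1-q)*c*((\<Sum>j. q^j * (LP (q^j*c) * g (q^j*c) * \<rho> (q^j*c))) - (\<Sum>j. q^j * (f (q^j*c) * LR (q^j*c) * \<rho> (q^j*c)))))"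
      by (simp only:)
    from sums_unique2[OF this sumsT[OF c]] show ?thesis .
  qed
  show ?thesis
    unfolding qint_def
    by (rule fin_alg[OF key[of a1, unfolded LP_def LR_def f_def g_def] key[of b1, unfolded LP_def LR_def f_def g_def]]) auto
qed




lemma summ_lat:
  fixes q a1 b1 a2 c :: real and \<rho> :: "real \<Rightarrow> real" and P Q :: "real poly"
  assumes "0<q" "q<1" "a1<0" "0<b1" "b1<a2" "c = a1 \<or> c = b1"
    and \<rho>_def: "\<rho> = (\<lambda>x. qpoch_inf (q*x/a1) q * qpoch_inf (q*x/b1) q / qpoch_inf (x/a2) q)"
  shows "summable (\<lambda>j. q^j * (poly P (q^j*c) * poly Q (q^j*c) * \<rho> (q^j*c)))"
  by (rule summable_lat[OF assms(1,2)])
     (rule tendsto_mult[OF tendsto_mult[OF poly_lat_lim poly_lat_lim] rho_lat_lim[OF assms]]; (use assms in auto))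

lemma qint_cmult:
  assumes "summable (\<lambda>j. q^j * F (q^j*b))" "summable (\<lambda>j. q^j * F (q^j*a))"
  shows "qint q a b (\<lambda>x. C * F x) = C * qint q a b F"
proof -
  have "(\<Sum>j. q^j * (C * F (q^j*b))) = C * (\<Sum>j. q^j * F (q^j*b))"
    using suminf_mult[OF assms(1), of C] by (simp add: mult_ac)
  moreover have "(\<Sum>j. q^j * (C * F (q^j*a))) = C * (\<Sum>j. q^j * F (q^j*a))"
    using suminf_mult[OF assms(2), of C] by (simp add: mult_ac)
  ultimately show ?thesis unfolding qint_def by (simp add: algebra_simps)
qed

lemma rho_pos:
  fixes q a1 b1 a2 c :: real and \<rho> :: "real \<Rightarrow> real"
  assumes "0<q" "q<1" "a1<0" "0<b1" "b1<a2" "c = a1 \<or> c = b1"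
    and \<rho>_def: "\<rho> = (\<lambda>x. qpoch_inf (q*x/a1) q * qpoch_inf (q*x/b1) q / qpoch_inf (x/a2) q)"
  shows "0 < \<rho> (q^j*c)"
proof -
  have l: "q*(q^j*c)/a1 < 1 \<and> q*(q^j*c)/b1 < 1 \<and> (q^j*c)/a2 < 1"
    using lat_facts[OF assms(1-6), of j] by blast
  have p1: "0 < qpoch_inf (q*(q^j*c)/a1) q" using qpoch_pos assms(1,2) l by blast
  have p2: "0 < qpoch_inf (q*(q^j*c)/b1) q" using qpoch_pos assms(1,2) l by blast
  have p3: "0 < qpoch_inf ((q^j*c)/a2) q" using qpoch_pos assms(1,2) l by blast
  show ?thesis unfolding \<rho>_def using divide_pos_pos[OF mult_pos_pos[OF p1 p2] p3] by simp
qed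

lemma pow_inj:
  fixes q :: real
  assumes "0<q" "q<1" "q^i = q^j"
  shows "i = j"
proof (rule ccontr)
  assume "i \<noteq> j"
  then consider "i < j" | "j < i" by linarith
  then show False
  proof cases
    case 1 then show ?thesis using power_strict_decreasing[OF 1 assms(1,2)] assms(3) by simp
  next
    case 2 then show ?thesis using power_strict_decreasing[OF 2 assms(1,2)] assms(3) by simp
  qed
qed

lemma lam_alg:
  fixes e q Q s :: real
  assumes "e \<noteq> 0" "q \<noteq> 0" "Q \<noteq> 0"
  shows "- ((1 - q*Q)/e) * (-(s/2)*(1/Q)/(-e/q)) = -(s/2)*q^2/e^2*(1/(q*Q) - 1)"
  using assms by (simp add: field_simps power2_eq_square)

lemma a_alg:
  fixes dd s w :: real
  assumes "dd \<noteq> 0"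
  shows "- (s / 2) / dd + 1 / 2 * ((1 - w) / dd) * s = - (s / 2) * w / dd"
  using assms by (simp add: field_simps)

lemma lam_closed:
  fixes q s :: real
  assumes "0<q" "q<1"
  shows "- qnum q (int n) * (- (s / 2) / (1 - 1 / q) + 1 / 2 * qnum (1 / q) (int n - 1) * s)
       = -(s/2)*q^2/(1-q)^2*(1/q^n - 1)"
proof (cases n)
  case 0
  then show ?thesis by (simp add: qnum_def)
next
  case (Suc m)
  have q0: "q \<noteq> 0" "1 - q \<noteq> 0" "1 - 1/q \<noteq> 0" using assms by auto
  have i: "int n - 1 = int m" using Suc by simp
  have a: "- (s / 2) / (1 - 1 / q) + 1 / 2 * qnum (1 / q) (int m) * s = -(s/2)*(1/q)^m/(1-1/q)"
    unfolding qnum_def power_int_of_nat by (rule a_alg[OF q0(3)])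
  have b: "qnum q (int n) = (1 - q^n)/(1-q)" unfolding qnum_def by simp
  have c: "1 - 1/q = -(1-q)/q" using q0 by (simp add: field_simps)
  have Q: "q^m \<noteq> 0" using q0 by simp
  have "- qnum q (int n) * (- (s / 2) / (1 - 1 / q) + 1 / 2 * qnum (1 / q) (int n - 1) * s)
      = - ((1 - q^n)/(1-q)) * (-(s/2)*(1/q)^m/(1-1/q))" by (simp only: i a b)
  also have "\<dots> = - ((1 - q*q^m)/(1-q)) * (-(s/2)*(1/q^m)/(-(1-q)/q))"
    by (simp only: c Suc power_Suc power_one_over)
  also have "\<dots> = -(s/2)*q^2/(1-q)^2*(1/(q*q^m) - 1)"
    by (rule lam_alg[OF q0(2) q0(1) Q])
  also have "\<dots> = -(s/2)*q^2/(1-q)^2*(1/q^n - 1)" by (simp only: Suc power_Suc)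
  finally show ?thesis .
qed

lemma qnum_qn: "qnum z (int n) = qn z n"
  unfolding qnum_def qn_def by simp

lemma exists_nonroot:
  fixes q b :: real and P :: "real poly"
  assumes "0<q" "q<1" "b \<noteq> 0" "P \<noteq> 0"
  shows "\<exists>i. poly P (q^i*b) \<noteq> 0"
proof (rule ccontr)
  assume "\<not> ?thesis"
  then have "range (\<lambda>i. q^i*b) \<subseteq> {x. poly P x = 0}" by auto
  moreover have "finite {x. poly P x = 0}" using poly_roots_finite[OF assms(4)] .
  ultimately have "finite (range (\<lambda>i. q^i*b))" by (rule finite_subset)
  moreover have "inj (\<lambda>i::nat. q^i*b)"
    by (rule injI) (use assms pow_inj in auto)
  ultimately show False using finite_imageD by blast
qed



theorem theorem5p10:
  fixes q s a1 b1 a2 t0 :: real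
    and \<sigma>1 \<tau> \<sigma>2 \<rho> :: "real \<Rightarrow> real"
    and t1 \<Lambda> :: real and lam :: "nat \<Rightarrow> real"
  assumes q: "0 < q" "q < 1"
    and s: "s \<noteq> 0"
    and \<sigma>1_def: "\<sigma>1 = (\<lambda>x. s / 2 * (x - a1) * (x - b1))"
    and t1_def: "t1 = - (s / 2) / (1 - 1 / q)"
    and \<tau>_def: "\<tau> = (\<lambda>x. t1 * x + t0)"
    and \<sigma>2_def: "\<sigma>2 = (\<lambda>x. q * (\<sigma>1 x + (1 - 1 / q) * x * \<tau> x))"
    and \<sigma>2_lin: "\<exists>k. k \<noteq> 0 \<and> (\<forall>x. \<sigma>2 x = k * (x - a2))"
    and lam_def: "lam = (\<lambda>n. - qnum q (int n) * (t1 + 1 / 2 * qnum (1 / q) (int n - 1) * s))"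
    and \<Lambda>_def: "\<Lambda> = a1 + b1 - (1 - 1 / q) * t0 / (s / 2)"
    and ord: "a1 < 0" "0 < b1" "b1 < a2"
    and \<Lambda>_neg: "\<Lambda> < 0"
    and \<rho>_def: "\<rho> = (\<lambda>x. qpoch_inf (q * x / a1) q * qpoch_inf (q * x / b1) q / qpoch_inf (x / a2) q)"
  shows "\<exists>(P :: nat \<Rightarrow> real poly) (d :: nat \<Rightarrow> real).
           (\<forall>n. degree (P n) = n \<and>
                (\<forall>x. \<sigma>1 x * qD (1 / q) (qD q (poly (P n))) x + \<tau> x * qD q (poly (P n)) x
                      + lam n * poly (P n) x = 0)) \<and>
           (\<forall>n. d n \<noteq> 0) \<and>
           (\<forall>m n. qint q a1 b1 (\<lambda>x. poly (P n) x * poly (P m) x * \<rho> x) = (if m = n then d n else 0))"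
proof -
  from \<sigma>2_lin obtain k where k: "k \<noteq> 0" "\<forall>x. \<sigma>2 x = k * (x - a2)" by blast
  have \<sigma>2k: "q*(s/2*(x-a1)*(x-b1) + (1-1/q)*x*(t1*x+t0)) = k*(x-a2)" for x
    using k(2) unfolding \<sigma>2_def \<sigma>1_def \<tau>_def by simp
  have lamc: "lam n = -(s/2)*q^2/(1-q)^2*(1/q^n - 1)" for n
  proof -
    have "lam n = - qnum q (int n) * (t1 + 1 / 2 * qnum (1 / q) (int n - 1) * s)"
      unfolding lam_def ..
    also have "\<dots> = -(s/2)*q^2/(1-q)^2*(1/q^n - 1)"
      unfolding t1_def by (rule lam_closed[OF q])
    finally show ?thesis .
  qed
  have lam_inj: "lam m \<noteq> lam n" if "m \<noteq> n" for m n
  proof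
    assume e: "lam m = lam n"
    have C: "-(s/2)*q^2/(1-q)^2 \<noteq> 0" using s q by simp
    from e have "1/q^m - 1 = 1/q^n - 1" unfolding lamc using C by simp
    then have "q^m = q^n" using q by simp
    then show False using pow_inj[OF q] that by blast
  qed
  have lam_coeff: "(if i = 0 then 0 else qn q i * (t1 + s/2 * qn (1/q) (i - 1))) = - lam i" for i
  proof (cases i)
    case 0 then show ?thesis unfolding lam_def by (simp add: qnum_def)
  next
    case (Suc m)
    have "int i - 1 = int m" using Suc by simp
    then have h: "qnum q (int i) = qn q i" "qnum (1/q) (int i - 1) = qn (1/q) (i - 1)"
      using Suc by (simp_all only: qnum_qn) simp
    show ?thesis unfolding lam_def h using Suc by (simp add: algebra_simps)
  qed
  have Lpoly: "poly (Lp q s a1 b1 t0 t1 p) x = \<sigma>1 x * qD (1/q) (qD q (poly p)) x + \<tau> x * qD q (poly p) x" for p x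
    unfolding \<sigma>1_def \<tau>_def by (rule poly_Lp[OF q])
  have ex: "\<exists>P. degree P = n \<and> P \<noteq> 0 \<and> Lp q s a1 b1 t0 t1 P + smult (lam n) P = 0" for n
  proof (rule exists_eig[where M = "\<lambda>p. Lp q s a1 b1 t0 t1 p + smult (lam n) p" and \<mu> = "\<lambda>i. lam n - lam i"])
    show "Lp q s a1 b1 t0 t1 (p + r) + smult (lam n) (p + r) =
          Lp q s a1 b1 t0 t1 p + smult (lam n) p + (Lp q s a1 b1 t0 t1 r + smult (lam n) r)" for p r
      by (simp add: Lp_add smult_add_right algebra_simps)
    show "Lp q s a1 b1 t0 t1 (smult c p) + smult (lam n) (smult c p) =
          smult c (Lp q s a1 b1 t0 t1 p + smult (lam n) p)" for c p
      by (simp add: Lp_smult smult_add_right mult.commute)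
    show "degree (Lp q s a1 b1 t0 t1 (monom 1 i) + smult (lam n) (monom 1 i)) \<le> i \<and>
          coeff (Lp q s a1 b1 t0 t1 (monom 1 i) + smult (lam n) (monom 1 i)) i = lam n - lam i" for i
    proof
      have d1: "degree (Lp q s a1 b1 t0 t1 (monom 1 i)) \<le> i" using Lp_monom by blast
      have d2: "degree (smult (lam n) (monom 1 i)) \<le> i"
        by (rule order.trans[OF degree_smult_le degree_monom_le])
      show "degree (Lp q s a1 b1 t0 t1 (monom 1 i) + smult (lam n) (monom 1 i)) \<le> i"
        by (rule degree_add_le[OF d1 d2])
      show "coeff (Lp q s a1 b1 t0 t1 (monom 1 i) + smult (lam n) (monom 1 i)) i = lam n - lam i"
        using Lp_monom[of q s a1 b1 t0 t1 i] lam_coeff[of i] by simp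
    qed
    show "lam n - lam i \<noteq> 0" if "i < n" for i using lam_inj[of n i] that by simp
    show "lam n - lam n = 0" by simp
  qed
  then obtain P where P: "\<And>n. degree (P n) = n \<and> P n \<noteq> 0 \<and> Lp q s a1 b1 t0 t1 (P n) + smult (lam n) (P n) = 0"
    by metis
  have LP: "Lp q s a1 b1 t0 t1 (P n) = smult (- lam n) (P n)" for n
    using P[of n] by (simp add: add_eq_0_iff)
  define d where "d n = qint q a1 b1 (\<lambda>x. poly (P n) x * poly (P n) x * \<rho> x)" for n
  have ab: "a1 = a1 \<or> a1 = b1" "b1 = a1 \<or> b1 = b1" by auto
  have summ: "summable (\<lambda>j. q^j * (poly Pa (q^j*c) * poly Qa (q^j*c) * \<rho> (q^j*c)))"
    if "c = a1 \<or> c = b1" for Pa Qa c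
    by (rule summ_lat[OF q ord that \<rho>_def])
  have eqn: "\<forall>x. \<sigma>1 x * qD (1 / q) (qD q (poly (P n))) x + \<tau> x * qD q (poly (P n)) x
                      + lam n * poly (P n) x = 0" for n
  proof
    fix x
    have "poly (Lp q s a1 b1 t0 t1 (P n) + smult (lam n) (P n)) x = 0" using P[of n] by simp
    then show "\<sigma>1 x * qD (1 / q) (qD q (poly (P n))) x + \<tau> x * qD q (poly (P n)) x
                      + lam n * poly (P n) x = 0" by (simp add: Lpoly)
  qed
  have dpos: "d n > 0" for n
  proof -
    let ?t = "\<lambda>c j. q^j * (poly (P n) (q^j*c) * poly (P n) (q^j*c) * \<rho> (q^j*c))"
    have nn: "0 \<le> ?t c j" if "c = a1 \<or> c = b1" for c j
      using rho_pos[OF q ord that \<rho>_def, of j] q by simp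
    obtain i where i: "poly (P n) (q^i*b1) \<noteq> 0"
      using exists_nonroot[OF q _, of b1 "P n"] P[of n] ord by auto
    have sq: "0 < poly (P n) (q^i*b1) * poly (P n) (q^i*b1)"
      using i by (auto simp add: zero_less_mult_iff linorder_neq_iff)
    have "0 < ?t b1 i"
      using mult_pos_pos[OF zero_less_power[OF q(1)] mult_pos_pos[OF sq rho_pos[OF q ord ab(2) \<rho>_def, of i]]] .
    then have Sb: "0 < suminf (?t b1)" by (rule suminf_pos2[OF summ[OF ab(2)] nn[OF ab(2)]])
    have Sa: "0 \<le> suminf (?t a1)" by (rule suminf_nonneg[OF summ[OF ab(1)] nn[OF ab(1)]])
    have "0 < (1-q)*b1* suminf (?t b1)" using Sb q ord by simp
    moreover have "0 \<le> (1-q)*(-a1)* suminf (?t a1)"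
      using Sa q ord by (intro mult_nonneg_nonneg) auto
    ultimately show ?thesis unfolding d_def qint_def by linarith
  qed
  have orth: "qint q a1 b1 (\<lambda>x. poly (P n) x * poly (P m) x * \<rho> x) = 0" if "m \<noteq> n" for m n
  proof -
    let ?I = "qint q a1 b1 (\<lambda>x. poly (P n) x * poly (P m) x * \<rho> x)"
    have sy: "qint q a1 b1 (\<lambda>x. poly (Lp q s a1 b1 t0 t1 (P n)) x * poly (P m) x * \<rho> x)
            = qint q a1 b1 (\<lambda>x. poly (P n) x * poly (Lp q s a1 b1 t0 t1 (P m)) x * \<rho> x)"
      by (rule symmetric[OF q ord \<sigma>2k \<rho>_def])
    have f1: "(\<lambda>x. poly (Lp q s a1 b1 t0 t1 (P n)) x * poly (P m) x * \<rho> x) =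
              (\<lambda>x. (- lam n) * (poly (P n) x * poly (P m) x * \<rho> x))"
      unfolding LP by (simp add: mult_ac)
    have f2: "(\<lambda>x. poly (P n) x * poly (Lp q s a1 b1 t0 t1 (P m)) x * \<rho> x) =
              (\<lambda>x. (- lam m) * (poly (P n) x * poly (P m) x * \<rho> x))"
      unfolding LP by (simp add: mult_ac)
    have cm: "qint q a1 b1 (\<lambda>x. C * (poly (P n) x * poly (P m) x * \<rho> x)) = C * ?I" for C
      by (rule qint_cmult[OF summ[OF ab(2)] summ[OF ab(1)]])
    have "qint q a1 b1 (\<lambda>x. (- lam n) * (poly (P n) x * poly (P m) x * \<rho> x))
        = qint q a1 b1 (\<lambda>x. (- lam m) * (poly (P n) x * poly (P m) x * \<rho> x))"
      using sy unfolding f1 f2 .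
    then have "(- lam n) * ?I = (- lam m) * ?I" unfolding cm .
    then have "(lam m - lam n) * ?I = 0" by (simp only: left_diff_distrib mult_minus_left)
    moreover have "lam m - lam n \<noteq> 0" using lam_inj[OF that] by simp
    ultimately show ?thesis by simp
  qed
  show ?thesis
  proof (intro exI[of _ P] exI[of _ d] conjI allI)
    fix n show "degree (P n) = n" using P by blast
  next
    fix n x show "\<sigma>1 x * qD (1 / q) (qD q (poly (P n))) x + \<tau> x * qD q (poly (P n)) x
                      + lam n * poly (P n) x = 0" using eqn by blast
  next
    fix n show "d n \<noteq> 0" using dpos[of n] by simp
  next
    fix m n show "qint q a1 b1 (\<lambda>x. poly (P n) x * poly (P m) x * \<rho> x) = (if m = n then d n else 0)"
      using orth[of m n] by (simp add: d_def)
  qed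
qed

end
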